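(* Suppose $F_0$ has a unique fixed point $\bar x$ in $V$, and that for some $m\ge0$ the map $F_m$ is monotone (nondecreasing or nonincreasing) in each of its arguments. Let $F_m^*$, the monotonicity types, $\le_\tau$, $P_\tau$, $P_\tau^t$ be as in the context, and assume: $F_m^*$ has a unique fixed point; $F_m^*$ has no pseudo-fixed points; and for every initial condition $X_0\in V^{k+m}$ there exist $x,y\in V$ with $$x\le y,\quad x<F_m^*(P_\tau(x,y)),\quad F_m^*(P_\tau^t(x,y))<y,\quad P_\tau(x,y)\le_\tau X_0\le_\tau P_\tau^t(x,y).$$ Then $\bar x$ is a global attractor of $x_{n+1}=F_0(x_n,\dots,x_{n-k+1})$: every solution with initial values in $V$ converges to $\bar x$.
   Context: Let $k\ge 2$, $V\subseteq\mathbb{R}$ be $\mathbb{R}$ or $[0,\infty)$, and $F_0:V^k\to V$ continuous. Define $F_m:V^k\to V$ recursively by $F_{m+1}(u_1,\dots,u_k)=F_m(F_0(u_1,\dots,u_k),u_1,\dots,u_{k-1})$; the $F_m$-equation is $z_{n+1}=F_m(z_{n-m},\dots,z_{n-m-k+1})$. Define $F_m^*:V^{k+m}\to V$ by $F_m^*(u_1,\dots,u_{k+m})=F_m(u_{m+1},\dots,u_{m+k})$, so the $F_m$-equation reads $z_{n+1}=F_m^*(z_n,\dots,z_{n-m-k+1})$, with initial condition $X_0=(z_0,z_{-1},\dots,z_{-m-k+1})\in V^{k+m}$. To each coordinate $i\in\{1,\dots,k+m\}$ assign a type "increasing" or "decreasing" such that $F_m^*$ is nondecreasing (resp. nonincreasing)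 in its $i$-th argument when the type is increasing (resp. decreasing); for the first $m$ coordinates, on which $F_m^*$ is constant, any type may be assigned. The partial order $\le_\tau$ on $V^{k+m}$: $(x_1,\dots,x_{k+m})\le_\tau(y_1,\dots,y_{k+m})$ iff $x_i\le y_i$ for coordinates of increasing type and $x_i\ge y_i$ for coordinates of decreasing type. For $x,y\in V$, $P_\tau(x,y)=(u_1,\dots,u_{k+m})$ with $u_i=x$ for increasing-type coordinates and $u_i=y$ for decreasing-type coordinates, and $P_\tau^t(x,y)$ is obtained by interchanging $x$ and $y$. A pseudo-fixed point of $F_m^*$ is a pair $(x,y)\in V^2$ with $x\ne y$, $x=F_m^*(P_\tau(x,y))$ and $y=F_m^*(P^t_\tau(x,y))$. A fixed point of $F_m^*$ is $x$ with $F_m^*(x,\dots,x)=x$. *)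

theory Defs
  imports "HOL-Analysis.Analysis"
begin

text \<open>Points of V^n are represented as functions nat => real that are
  0-indexed (u 0 = u_1, ..., u (n-1) = u_n) and extensional (value 0 at
  indices >= n).\<close>

definition dom :: "nat \<Rightarrow> real set \<Rightarrow> (nat \<Rightarrow> real) set" where
  "dom n V = {u. (\<forall>i<n. u i \<in> V) \<and> (\<forall>i\<ge>n. u i = 0)}"

definition cst :: "nat \<Rightarrow> real \<Rightarrow> (nat \<Rightarrow> real)" where
  "cst n x = (\<lambda>i. if i < n then x else 0)"

fun Fm :: "nat \<Rightarrow> ((nat \<Rightarrow> real) \<Rightarrow> real) \<Rightarrow> nat \<Rightarrow> (nat \<Rightarrow> real) \<Rightarrow> real" where
  "Fm k F0 0 u = F0 u"
| "Fm k F0 (Suc m) u =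
     Fm k F0 m (\<lambda>i. if i = 0 then F0 u else if i < k then u (i - 1) else 0)"

definition Fstar :: "nat \<Rightarrow> ((nat \<Rightarrow> real) \<Rightarrow> real) \<Rightarrow> nat \<Rightarrow> (nat \<Rightarrow> real) \<Rightarrow> real" where
  "Fstar k F0 m u = Fm k F0 m (\<lambda>i. if i < k then u (m + i) else 0)"

text \<open>tau i = True: coordinate i (0-indexed) has increasing type.\<close>
definition le_tau :: "(nat \<Rightarrow> bool) \<Rightarrow> nat \<Rightarrow> (nat \<Rightarrow> real) \<Rightarrow> (nat \<Rightarrow> real) \<Rightarrow> bool" where
  "le_tau tau n x y = (\<forall>i<n. (tau i \<longrightarrow> x i \<le> y i) \<and> (\<not> tau i \<longrightarrow> x i \<ge> y i))"

definition P_tau :: "(nat \<Rightarrow> bool) \<Rightarrow> nat \<Rightarrow> real \<Rightarrow> real \<Rightarrow> (nat \<Rightarrow> real)" where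
  "P_tau tau n x y = (\<lambda>i. if i < n then (if tau i then x else y) else 0)"

definition Pt_tau :: "(nat \<Rightarrow> bool) \<Rightarrow> nat \<Rightarrow> real \<Rightarrow> real \<Rightarrow> (nat \<Rightarrow> real)" where
  "Pt_tau tau n x y = P_tau tau n y x"

definition nondecr_arg :: "nat \<Rightarrow> real set \<Rightarrow> ((nat \<Rightarrow> real) \<Rightarrow> real) \<Rightarrow> nat \<Rightarrow> bool" where
  "nondecr_arg n V G i = (\<forall>u\<in>dom n V. \<forall>a\<in>V. \<forall>b\<in>V. a \<le> b \<longrightarrow> G (u(i := a)) \<le> G (u(i := b)))"

definition nonincr_arg :: "nat \<Rightarrow> real set \<Rightarrow> ((nat \<Rightarrow> real) \<Rightarrow> real) \<Rightarrow> nat \<Rightarrow> bool" where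
  "nonincr_arg n V G i = (\<forall>u\<in>dom n V. \<forall>a\<in>V. \<forall>b\<in>V. a \<le> b \<longrightarrow> G (u(i := a)) \<ge> G (u(i := b)))"

definition pseudo_fixed_point ::
  "real set \<Rightarrow> ((nat \<Rightarrow> real) \<Rightarrow> real) \<Rightarrow> (nat \<Rightarrow> bool) \<Rightarrow> nat \<Rightarrow> real \<Rightarrow> real \<Rightarrow> bool" where
  "pseudo_fixed_point V G tau n x y =
     (x \<in> V \<and> y \<in> V \<and> x \<noteq> y \<and> x = G (P_tau tau n x y) \<and> y = G (Pt_tau tau n x y))"

text \<open>z (0..k-1) = x_{-k+1}, ..., x_0;  z (n+k) = F0(z(n+k-1), ..., z n).\<close>
definition is_solution :: "nat \<Rightarrow> real set \<Rightarrow> ((nat \<Rightarrow> real) \<Rightarrow> real) \<Rightarrow> (nat \<Rightarrow> real) \<Rightarrow> bool" where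
  "is_solution k V F0 z = ((\<forall>i<k. z i \<in> V) \<and>
     (\<forall>n. z (n + k) = F0 (\<lambda>i. if i < k then z (n + k - 1 - i) else 0)))"

end

theory Submission
  imports Defs
begin

lemma tendsto_fun_iff: "((f::'a \<Rightarrow> nat \<Rightarrow> real) \<longlongrightarrow> l) F \<longleftrightarrow> (\<forall>i. ((\<lambda>c. f c i) \<longlongrightarrow> l i) F)"
  using limitin_componentwise[of "\<lambda>i. euclidean" UNIV f l F] by (simp add: euclidean_product_topology)

definition sh :: "nat \<Rightarrow> ((nat \<Rightarrow> real) \<Rightarrow> real) \<Rightarrow> (nat \<Rightarrow> real) \<Rightarrow> (nat \<Rightarrow> real)" where
  "sh k F0 u = (\<lambda>i. if i = 0 then F0 u else if i < k then u (i - 1) else 0)"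

lemma Fm_Suc': "Fm k F0 (Suc m) u = Fm k F0 m (sh k F0 u)"
  by (simp add: sh_def)

declare Fm.simps(2)[simp del]

lemma sh_dom:
  assumes "\<forall>u\<in>dom k V. F0 u \<in> V" "u \<in> dom k V" "k \<ge> 1"
  shows "sh k F0 u \<in> dom k V"
  using assms unfolding dom_def sh_def by auto

lemma Fm_maps:
  assumes "\<forall>u\<in>dom k V. F0 u \<in> V" "k \<ge> 1"
  shows "u \<in> dom k V \<Longrightarrow> Fm k F0 m u \<in> V"
proof (induction m arbitrary: u)
  case 0 then show ?case using assms by simp
next
  case (Suc m) then show ?case using sh_dom[OF assms(1) _ assms(2)] by (simp add: Fm_Suc')
qed

lemma Fm_cst:
  assumes "F0 (cst k x) = x" "k \<ge> 1"
  shows "Fm k F0 m (cst k x) = x"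
proof (induction m)
  case 0 then show ?case using assms by simp
next
  case (Suc m)
  have "sh k F0 (cst k x) = cst k x" using assms unfolding sh_def cst_def by (auto simp: fun_eq_iff)
  then show ?case using Suc by (simp add: Fm_Suc')
qed

lemma F0_seq:
  assumes "continuous_on (dom k V) F0" "u \<in> dom k V" "\<forall>j. us j \<in> dom k V"
    "\<forall>i. (\<lambda>j. us j i) \<longlonglongrightarrow> u i"
  shows "(\<lambda>j. F0 (us j)) \<longlonglongrightarrow> F0 u"
proof -
  have "us \<longlonglongrightarrow> u" using assms(4) by (simp add: tendsto_fun_iff)
  from continuous_on_tendsto_compose[OF assms(1) this assms(2)] assms(3)
  show ?thesis by (simp add: o_def)
qed

lemma Fm_seq:
  assumes "continuous_on (dom k V) F0" "\<forall>u\<in>dom k V. F0 u \<in> V" "k \<ge> 1"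
  shows "u \<in> dom k V \<Longrightarrow> \<forall>j. us j \<in> dom k V \<Longrightarrow> \<forall>i. (\<lambda>j. us j i) \<longlonglongrightarrow> u i \<Longrightarrow>
    (\<lambda>j. Fm k F0 m (us j)) \<longlonglongrightarrow> Fm k F0 m u"
proof (induction m arbitrary: u us)
  case 0 then show ?case using F0_seq[OF assms(1)] by simp
next
  case (Suc m)
  have F: "(\<lambda>j. F0 (us j)) \<longlonglongrightarrow> F0 u" using F0_seq[OF assms(1)] Suc.prems by blast
  have "\<forall>i. (\<lambda>j. sh k F0 (us j) i) \<longlonglongrightarrow> sh k F0 u i"
    using F Suc.prems(3) by (auto simp: sh_def)
  moreover have "sh k F0 u \<in> dom k V" "\<forall>j. sh k F0 (us j) \<in> dom k V"
    using sh_dom[OF assms(2) _ assms(3)] Suc.prems by auto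
  ultimately show ?case using Suc.IH by (simp add: Fm_Suc')
qed

lemma Fstar_cong:
  assumes "\<forall>i<k. u (m + i) = v (m + i)"
  shows "Fstar k F0 m u = Fstar k F0 m v"
  unfolding Fstar_def using assms by (metis)

lemma restr_dom: "u \<in> dom (k + m) V \<Longrightarrow> (\<lambda>i. if i < k then u (m + i) else 0) \<in> dom k V"
  unfolding dom_def by auto

lemma Fstar_maps:
  assumes "\<forall>u\<in>dom k V. F0 u \<in> V" "k \<ge> 1" "u \<in> dom (k + m) V"
  shows "Fstar k F0 m u \<in> V"
  unfolding Fstar_def using Fm_maps[OF assms(1,2) restr_dom[OF assms(3)]] .

lemma Fstar_seq:
  assumes "continuous_on (dom k V) F0" "\<forall>u\<in>dom k V. F0 u \<in> V" "k \<ge> 1"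
   "u \<in> dom (k + m) V" "\<forall>j. us j \<in> dom (k + m) V" "\<forall>i. (\<lambda>j. us j i) \<longlonglongrightarrow> u i"
  shows "(\<lambda>j. Fstar k F0 m (us j)) \<longlonglongrightarrow> Fstar k F0 m u"
  unfolding Fstar_def
  apply (rule Fm_seq[OF assms(1-3)])
  using restr_dom assms(4-6) by auto

lemma Fstar_mono:
  assumes types: "\<forall>i. m \<le> i \<and> i < k + m \<longrightarrow>
         (tau i \<longrightarrow> nondecr_arg (k + m) V (Fstar k F0 m) i) \<and>
         (\<not> tau i \<longrightarrow> nonincr_arg (k + m) V (Fstar k F0 m) i)"
    and u: "u \<in> dom (k + m) V" and v: "v \<in> dom (k + m) V" and le: "le_tau tau (k + m) u v"
  shows "Fstar k F0 m u \<le> Fstar k F0 m v"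
proof -
  define w where "w j = (\<lambda>i. if i < j then v i else u i)" for j
  have wd: "w j \<in> dom (k + m) V" for j using u v unfolding w_def dom_def by auto
  have "j \<le> k + m \<Longrightarrow> Fstar k F0 m u \<le> Fstar k F0 m (w j)" for j
  proof (induction j)
    case 0 then show ?case by (simp add: w_def)
  next
    case (Suc j)
    have e1: "w (Suc j) = (w j)(j := v j)" and e2: "w j = (w j)(j := u j)"
      unfolding w_def by auto
    have uj: "u j \<in> V" and vj: "v j \<in> V" using u v Suc.prems unfolding dom_def by auto
    have "Fstar k F0 m (w j) \<le> Fstar k F0 m (w (Suc j))"
    proof (cases "j < m")
      case True
      have "\<forall>i<k. w (Suc j) (m + i) = w j (m + i)" using True e1 by auto
      then show ?thesis using Fstar_cong[of k "w (Suc j)" m "w j" F0] by simp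
    next
      case False
      then have t: "(tau j \<longrightarrow> nondecr_arg (k + m) V (Fstar k F0 m) j) \<and>
         (\<not> tau j \<longrightarrow> nonincr_arg (k + m) V (Fstar k F0 m) j)" using types Suc.prems by auto
      show ?thesis
      proof (cases "tau j")
        case True
        then have "u j \<le> v j" using le Suc.prems unfolding le_tau_def by auto
        then show ?thesis using t True wd uj vj unfolding nondecr_arg_def
          by (metis e1 e2)
      next
        case False
        then have "v j \<le> u j" using le Suc.prems unfolding le_tau_def by auto
        then show ?thesis using t False wd uj vj unfolding nonincr_arg_def
          by (metis e1 e2)
      qed
    qed
    then show ?case using Suc by simp
  qed
  moreover have "w (k + m) = v" using u v unfolding w_def dom_def by auto
  ultimately show ?thesis by fastforce
qed

lemma Fm_sol:
  assumes "is_solution k V F0 z" "k \<ge> 1"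
  shows "z (N + k + m) = Fm k F0 m (\<lambda>i. if i < k then z (N + k - 1 - i) else 0)"
  using assms
proof (induction m arbitrary: N)
  case 0 then show ?case unfolding is_solution_def by simp
next
  case (Suc m)
  have "sh k F0 (\<lambda>i. if i < k then z (N + k - 1 - i) else 0) =
        (\<lambda>i. if i < k then z (Suc N + k - 1 - i) else 0)"
    using Suc.prems(1) \<open>k \<ge> 1\<close> unfolding sh_def is_solution_def
    by (auto simp: fun_eq_iff Suc_diff_le)
  then show ?case using Suc.IH[of "Suc N"] Suc.prems by (simp add: Fm_Suc')
qed


theorem mainTheorem9:
  fixes k m :: nat and V :: "real set" and F0 :: "(nat \<Rightarrow> real) \<Rightarrow> real"
    and xbar :: real and tau :: "nat \<Rightarrow> bool"
  assumes k2: "k \<ge> 2"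
    and V: "V = UNIV \<or> V = {0..}"
    and F0_maps: "\<forall>u\<in>dom k V. F0 u \<in> V"
    and F0_cont: "continuous_on (dom k V) F0"
    and xbar: "xbar \<in> V" "F0 (cst k xbar) = xbar"
    and xbar_unique: "\<forall>x\<in>V. F0 (cst k x) = x \<longrightarrow> x = xbar"
    and types: "\<forall>i. m \<le> i \<and> i < k + m \<longrightarrow>
         (tau i \<longrightarrow> nondecr_arg (k + m) V (Fstar k F0 m) i) \<and>
         (\<not> tau i \<longrightarrow> nonincr_arg (k + m) V (Fstar k F0 m) i)"
    and fix_unique: "\<exists>!x. x \<in> V \<and> Fstar k F0 m (cst (k + m) x) = x"
    and no_pseudo: "\<not> (\<exists>x y. pseudo_fixed_point V (Fstar k F0 m) tau (k + m) x y)"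
    and bounds: "\<forall>X0\<in>dom (k + m) V. \<exists>x\<in>V. \<exists>y\<in>V. x \<le> y \<and>
         x < Fstar k F0 m (P_tau tau (k + m) x y) \<and>
         Fstar k F0 m (Pt_tau tau (k + m) x y) < y \<and>
         le_tau tau (k + m) (P_tau tau (k + m) x y) X0 \<and>
         le_tau tau (k + m) X0 (Pt_tau tau (k + m) x y)"
  shows "\<forall>z. is_solution k V F0 z \<longrightarrow> z \<longlonglongrightarrow> xbar"
proof (intro allI impI)
  fix z assume sol: "is_solution k V F0 z"
  define n where "n = k + m"
  define G where "G = Fstar k F0 m"
  have k1: "k \<ge> 1" using k2 by simp
  have Vclosed: "closed V" using V by auto
  have Gmaps: "u \<in> dom n V \<Longrightarrow> G u \<in> V" for u
    using Fstar_maps[OF F0_maps k1] unfolding G_def n_def by blast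
  have Gmono: "u \<in> dom n V \<Longrightarrow> v \<in> dom n V \<Longrightarrow> le_tau tau n u v \<Longrightarrow> G u \<le> G v" for u v
    using Fstar_mono[OF types] unfolding G_def n_def by blast
  have Pdom: "p \<in> V \<Longrightarrow> q \<in> V \<Longrightarrow> P_tau tau n p q \<in> dom n V" for p q
    unfolding P_tau_def dom_def by auto
  have Ptdom: "p \<in> V \<Longrightarrow> q \<in> V \<Longrightarrow> Pt_tau tau n p q \<in> dom n V" for p q
    unfolding Pt_tau_def using Pdom by blast
  have PPt: "p \<le> q \<Longrightarrow> le_tau tau n (P_tau tau n p q) (Pt_tau tau n p q)" for p q
    unfolding le_tau_def P_tau_def Pt_tau_def by auto
  have Pmono: "p \<le> p' \<Longrightarrow> q' \<le> q \<Longrightarrow> le_tau tau n (P_tau tau n p q) (P_tau tau n p' q')" for p q p' q'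
    unfolding le_tau_def P_tau_def by auto
  have Ptmono: "p \<le> p' \<Longrightarrow> q' \<le> q \<Longrightarrow> le_tau tau n (Pt_tau tau n p' q') (Pt_tau tau n p q)" for p q p' q'
    unfolding le_tau_def P_tau_def Pt_tau_def by auto
  have zV: "z i \<in> V" for i
  proof (induction i rule: less_induct)
    case (less i)
    show ?case
    proof (cases "i < k")
      case True then show ?thesis using sol unfolding is_solution_def by auto
    next
      case False
      then obtain N where N: "i = N + k" by (metis add.commute le_Suc_ex not_less)
      have "(\<lambda>j. if j < k then z (N + k - 1 - j) else 0) \<in> dom k V"
        unfolding dom_def using less N k1 by auto
      then show ?thesis using sol F0_maps N unfolding is_solution_def by auto
    qed
  qed
  define W where "W N = (\<lambda>i. if i < n then z (N + n - 1 - i) else 0)" for N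
  have Wdom: "W N \<in> dom n V" for N unfolding W_def dom_def using zV by auto
  have zG: "z (N + n) = G (W N)" for N
  proof -
    have "(\<lambda>i. if i < k then W N (m + i) else 0) = (\<lambda>i. if i < k then z (N + k - 1 - i) else 0)"
      unfolding W_def n_def using k1 by (auto simp: fun_eq_iff)
    then show ?thesis using Fm_sol[OF sol k1, of N m] unfolding G_def Fstar_def n_def
      by (simp add: add.assoc)
  qed
  have window: "G (P_tau tau n p q) \<le> z (N + n) \<and> z (N + n) \<le> G (Pt_tau tau n p q)"
    if "p \<in> V" "q \<in> V" "\<forall>i<n. p \<le> z (N + i) \<and> z (N + i) \<le> q" for p q N
  proof -
    have "\<forall>i<n. p \<le> W N i \<and> W N i \<le> q"
    proof (intro allI impI)
      fix i assume i: "i < n"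
      have e: "W N i = z (N + (n - 1 - i))" unfolding W_def
        by (subst if_P[OF i], rule arg_cong[where f=z], use i in arith)
      have "n - 1 - i < n" using i by auto
      then show "p \<le> W N i \<and> W N i \<le> q" using that(3) e by auto
    qed
    then have "le_tau tau n (P_tau tau n p q) (W N)" "le_tau tau n (W N) (Pt_tau tau n p q)"
      unfolding le_tau_def P_tau_def Pt_tau_def by auto
    then show ?thesis using Gmono[OF Pdom[OF that(1,2)] Wdom] Gmono[OF Wdom Ptdom[OF that(1,2)]] zG[of N] by simp
  qed
  obtain x y where xy: "x \<in> V" "y \<in> V" "x \<le> y" "x < G (P_tau tau n x y)"
    "G (Pt_tau tau n x y) < y" "le_tau tau n (P_tau tau n x y) (W 0)"
    "le_tau tau n (W 0) (Pt_tau tau n x y)"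
    using bounds Wdom[of 0] unfolding G_def n_def by blast
  have z0: "\<forall>i<n. x \<le> z i \<and> z i \<le> y"
  proof (intro allI impI)
    fix i assume i: "i < n"
    have ii: "n - 1 - i < n" using i by auto
    have e: "W 0 (n - 1 - i) = z i" unfolding W_def
      by (subst if_P[OF ii], rule arg_cong[where f=z], use i in arith)
    have "(tau (n-1-i) \<longrightarrow> P_tau tau n x y (n-1-i) \<le> W 0 (n-1-i)) \<and> (\<not> tau (n-1-i) \<longrightarrow> P_tau tau n x y (n-1-i) \<ge> W 0 (n-1-i))"
      "(tau (n-1-i) \<longrightarrow> W 0 (n-1-i) \<le> Pt_tau tau n x y (n-1-i)) \<and> (\<not> tau (n-1-i) \<longrightarrow> W 0 (n-1-i) \<ge> Pt_tau tau n x y (n-1-i))"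
      using xy(6,7) ii unfolding le_tau_def by blast+
    then show "x \<le> z i \<and> z i \<le> y" using ii xy(3) unfolding e P_tau_def Pt_tau_def
      by (cases "tau (n-1-i)") auto
  qed
  define f where "f = (\<lambda>(p, q). (G (P_tau tau n p q), G (Pt_tau tau n p q)))"
  define a where "a j = fst ((f ^^ j) (x, y))" for j
  define b where "b j = snd ((f ^^ j) (x, y))" for j
  have a0: "a 0 = x" and b0: "b 0 = y" unfolding a_def b_def by auto
  have aS: "a (Suc j) = G (P_tau tau n (a j) (b j))" and bS: "b (Suc j) = G (Pt_tau tau n (a j) (b j))" for j
    unfolding a_def b_def f_def by (simp_all add: case_prod_beta)
  have inv: "a j \<in> V \<and> b j \<in> V \<and> a j \<le> a (Suc j) \<and> a (Suc j) \<le> b (Suc j) \<and> b (Suc j) \<le> b j" for j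
  proof (induction j)
    case 0
    show ?case using xy a0 b0 aS[of 0] bS[of 0] Gmono[OF Pdom Ptdom PPt] by force
  next
    case (Suc j)
    have V': "a (Suc j) \<in> V" "b (Suc j) \<in> V" using Suc aS bS Gmaps Pdom Ptdom by auto
    have "a (Suc j) = G (P_tau tau n (a j) (b j))" by (rule aS)
    also have "\<dots> \<le> G (P_tau tau n (a (Suc j)) (b (Suc j)))"
      using Gmono[OF Pdom[of "a j" "b j"] Pdom[OF V'] Pmono] Suc by simp
    also have "\<dots> = a (Suc (Suc j))" by (rule aS[symmetric])
    finally have 1: "a (Suc j) \<le> a (Suc (Suc j))" .
    have "b (Suc (Suc j)) = G (Pt_tau tau n (a (Suc j)) (b (Suc j)))" by (rule bS)
    also have "\<dots> \<le> G (Pt_tau tau n (a j) (b j))"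
      using Gmono[OF Ptdom[OF V'] Ptdom[of "a j" "b j"] Ptmono] Suc by simp
    also have "\<dots> = b (Suc j)" by (rule bS[symmetric])
    finally have 2: "b (Suc (Suc j)) \<le> b (Suc j)" .
    have "a (Suc (Suc j)) = G (P_tau tau n (a (Suc j)) (b (Suc j)))" by (rule aS)
    also have "\<dots> \<le> G (Pt_tau tau n (a (Suc j)) (b (Suc j)))"
      using Gmono[OF Pdom[OF V'] Ptdom[OF V'] PPt] Suc by simp
    also have "\<dots> = b (Suc (Suc j))" by (rule bS[symmetric])
    finally have 3: "a (Suc (Suc j)) \<le> b (Suc (Suc j))" .
    show ?case using V' 1 2 3 by auto
  qed
  have amono: "incseq a" using inv by (simp add: incseq_SucI)
  have bmono: "decseq b" using inv by (simp add: decseq_SucI)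
  have ab: "a j \<le> b i" for i j
  proof -
    have "a j \<le> a (max i j)" "b (max i j) \<le> b i" using amono bmono by (auto simp: incseq_def decseq_def)
    moreover have "a (max i j) \<le> b (max i j)" using inv[of "max i j"] by auto
    ultimately show ?thesis by linarith
  qed
  obtain L where L: "a \<longlonglongrightarrow> L"
    using incseq_convergent[OF amono, of "b 0"] ab by blast
  obtain U where U: "b \<longlonglongrightarrow> U"
    using decseq_convergent[OF bmono, of "a 0"] ab by blast
  have LV: "L \<in> V" using closed_sequentially[OF Vclosed _ L] inv by blast
  have UV: "U \<in> V" using closed_sequentially[OF Vclosed _ U] inv by blast
  have aL: "a j \<le> L" for j using incseq_le[OF amono L] .
  have bU: "U \<le> b j" for j using decseq_ge[OF bmono U] .
  have contG: "(\<lambda>j. G (us j)) \<longlonglongrightarrow> G u"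
    if "u \<in> dom n V" "\<forall>j. us j \<in> dom n V" "\<forall>i. (\<lambda>j. us j i) \<longlonglongrightarrow> u i" for u us
    using Fstar_seq[OF F0_cont F0_maps k1] that unfolding G_def n_def by blast
  have "(\<lambda>j. a (Suc j)) \<longlonglongrightarrow> G (P_tau tau n L U)"
    unfolding aS
    apply (rule contG)
    using Pdom LV UV inv L U by (auto simp: P_tau_def)
  moreover have "(\<lambda>j. a (Suc j)) \<longlonglongrightarrow> L" using L by (rule LIMSEQ_Suc)
  ultimately have L1: "L = G (P_tau tau n L U)" using LIMSEQ_unique by blast
  have "(\<lambda>j. b (Suc j)) \<longlonglongrightarrow> G (Pt_tau tau n L U)"
    unfolding bS
    apply (rule contG)
    using Ptdom LV UV inv L U by (auto simp: P_tau_def Pt_tau_def)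
  moreover have "(\<lambda>j. b (Suc j)) \<longlonglongrightarrow> U" using U by (rule LIMSEQ_Suc)
  ultimately have U1: "U = G (Pt_tau tau n L U)" using LIMSEQ_unique by blast
  have LU: "L = U"
    using no_pseudo L1 U1 LV UV unfolding pseudo_fixed_point_def G_def n_def by blast
  have "P_tau tau n L L = cst n L" unfolding P_tau_def cst_def by auto
  then have "G (cst n L) = L" using L1 LU by simp
  moreover have "G (cst n xbar) = xbar"
  proof -
    have "(\<lambda>i. if i < k then cst n xbar (m + i) else 0) = cst k xbar"
      unfolding cst_def n_def by auto
    then show ?thesis unfolding G_def Fstar_def using Fm_cst[of F0 k xbar m, OF xbar(2) k1] by simp
  qed
  ultimately have Lx: "L = xbar" using fix_unique LV xbar(1) unfolding G_def n_def by blast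
  have trap: "\<forall>N\<ge>j * n. a j \<le> z N \<and> z N \<le> b j" for j
  proof (induction j)
    case 0
    show ?case
    proof (intro allI impI)
      fix N :: nat
      show "a 0 \<le> z N \<and> z N \<le> b 0"
      proof (induction N rule: less_induct)
        case (less N)
        show ?case
        proof (cases "N < n")
          case True then show ?thesis using z0 a0 b0 by auto
        next
          case False
          then obtain M where M: "N = M + n" by (metis add.commute le_Suc_ex not_less)
          have "\<forall>i<n. a 0 \<le> z (M + i) \<and> z (M + i) \<le> b 0" using less M by auto
          then have "G (P_tau tau n (a 0) (b 0)) \<le> z N \<and> z N \<le> G (Pt_tau tau n (a 0) (b 0))"
            using window[of "a 0" "b 0" M] inv[of 0] M by simp
          then show ?thesis using inv[of 0] aS[of 0] bS[of 0] by auto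
        qed
      qed
    qed
  next
    case (Suc j)
    show ?case
    proof (intro allI impI)
      fix N assume N: "Suc j * n \<le> N"
      define M where "M = N - n"
      have M: "N = M + n" "j * n \<le> M" using N unfolding M_def by auto
      have "\<forall>i<n. a j \<le> z (M + i) \<and> z (M + i) \<le> b j" using Suc M by auto
      then show "a (Suc j) \<le> z N \<and> z N \<le> b (Suc j)"
        using window[of "a j" "b j" M] inv[of j] M(1) aS[of j] bS[of j] by simp
    qed
  qed
  show "z \<longlonglongrightarrow> xbar"
  proof (rule LIMSEQ_I)
    fix r :: real assume r: "0 < r"
    obtain j1 where j1: "\<forall>j\<ge>j1. norm (a j - L) < r" using LIMSEQ_D[OF L r] by blast
    obtain j2 where j2: "\<forall>j\<ge>j2. norm (b j - U) < r" using LIMSEQ_D[OF U r] by blast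
    define j where "j = max j1 j2"
    have "norm (a j - L) < r" "norm (b j - U) < r" using j1 j2 unfolding j_def by auto
    then have "a j > xbar - r" "b j < xbar + r" using aL[of j] bU[of j] Lx LU by auto
    then show "\<exists>no. \<forall>N\<ge>no. norm (z N - xbar) < r"
      using trap[of j] by (intro exI[of _ "j * n"]) auto
  qed
qed

end
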